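(* Let $r\ge1$, $n$ be integers and let $\sigma,\sigma':\mathbb{Z}_n\to\{0,1\}$ be a temporally periodic pair, with block-length vectors $\vec v$ and $\vec v'$ respectively. Then $|\vec v|=|\vec v'|$, i.e. $|B(\sigma)|=|B(\sigma')|$.
   Context: Cells are elements of $\mathbb{Z}_n$, arithmetic mod $n$; $[a,b]$ denotes the cyclic interval $a,\dots,b$. The majority rule with radius $r$: $\mathrm{maj}_r(\sigma)(i)=0$ if among the cells of $[i-r,i+r]$ strictly more have value $0$ than $1$ under $\sigma$, and $=1$ otherwise. A temporally periodic pair is a pair with $\mathrm{maj}_r(\sigma)=\sigma'$ and $\mathrm{maj}_r(\sigma')=\sigma$. For $\beta\in\{0,1\}$, $B^\beta(\sigma)$ is the set of cell intervals $[i,j]$ with $\sigma(k)=\beta$ for all $k\in[i,j]$ and $\sigma(i-1)=\sigma(j+1)=1-\beta$; $B(\sigma)=B^0(\sigma)\cup B^1(\sigma)$. The block-length vector of $\sigma$ is the cyclic sequence of lengths of the blocks in $B(\sigma)$ listed in their cyclic order; its length $|\vec v|$ is the number of entries, $|B(\sigma)|$. *)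

theory Defs
  imports Main
begin

text \<open>Configurations on Z_n are modelled as functions int => bool (True = 1, False = 0);
  only the values on representatives i mod n are ever consulted.\<close>

definition maj :: "int \<Rightarrow> int \<Rightarrow> (int \<Rightarrow> bool) \<Rightarrow> int \<Rightarrow> bool" where
  "maj r n \<sigma> i =
     (if card {k \<in> {-r..r}. \<not> \<sigma> ((i + k) mod n)} > card {k \<in> {-r..r}. \<sigma> ((i + k) mod n)}
      then False else True)"

definition tp_pair :: "int \<Rightarrow> int \<Rightarrow> (int \<Rightarrow> bool) \<Rightarrow> (int \<Rightarrow> bool) \<Rightarrow> bool" where
  "tp_pair r n \<sigma> \<sigma>' \<longleftrightarrow>
     (\<forall>i\<in>{0..<n}. maj r n \<sigma> i = \<sigma>' i) \<and> (\<forall>i\<in>{0..<n}. maj r n \<sigma>' i = \<sigma> i)"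

text \<open>B^beta(sigma): cyclic intervals [i,j] (i, j in Z_n, cells i, i+1, ..., j) that are
  monochromatic of colour beta and bounded on both sides by the other colour.\<close>
definition blocks :: "int \<Rightarrow> bool \<Rightarrow> (int \<Rightarrow> bool) \<Rightarrow> (int \<times> int) set" where
  "blocks n \<beta> \<sigma> = {(i, j). i \<in> {0..<n} \<and> j \<in> {0..<n} \<and>
      (\<forall>k\<in>{0..(j - i) mod n}. \<sigma> ((i + k) mod n) = \<beta>) \<and>
      \<sigma> ((i - 1) mod n) = (\<not> \<beta>) \<and> \<sigma> ((j + 1) mod n) = (\<not> \<beta>)}"

definition all_blocks :: "int \<Rightarrow> (int \<Rightarrow> bool) \<Rightarrow> (int \<times> int) set" where
  "all_blocks n \<sigma> = blocks n False \<sigma> \<union> blocks n True \<sigma>"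

end

theory Submission
  imports Defs
begin

lemma maj_periodic:
  assumes "n \<ge> 1"
  shows "maj r n \<sigma> (i mod n) = maj r n \<sigma> i"
proof -
  have "\<And>k. (i mod n + k) mod n = (i + k) mod n" by (simp add: mod_add_left_eq)
  then show ?thesis unfolding maj_def by simp
qed

lemma card_shift:
  fixes i r n :: int
  shows "card {k \<in> {-r..r}. P ((i + k) mod n)} = card {j \<in> {i-r..i+r}. P (j mod n)}"
proof -
  have "{j \<in> {i-r..i+r}. P (j mod n)} = (\<lambda>k. i + k) ` {k \<in> {-r..r}. P ((i + k) mod n)}"
  proof (rule set_eqI, rule iffI)
    fix x assume "x \<in> {j \<in> {i-r..i+r}. P (j mod n)}"
    then show "x \<in> (\<lambda>k. i + k) ` {k \<in> {-r..r}. P ((i + k) mod n)}"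
      by (intro image_eqI[of _ _ "x - i"]) auto
  qed auto
  moreover have "inj_on (\<lambda>k. i + k) {k \<in> {-r..r}. P ((i + k) mod n)}" by (auto simp: inj_on_def)
  ultimately show ?thesis by (simp add: card_image)
qed

lemma card_step:
  fixes i r :: int and P :: "int \<Rightarrow> bool"
  assumes "r \<ge> 0"
  shows "int (card {j \<in> {i+1-r..i+1+r}. P j}) + (if P (i-r) then 1 else 0)
       = int (card {j \<in> {i-r..i+r}. P j}) + (if P (i+r+1) then 1 else 0)"
proof -
  have e1: "{j \<in> {i-r..i+r+1}. P j} = {j \<in> {i+1-r..i+1+r}. P j} \<union> ({i-r} \<inter> Collect P)"
    using assms by auto
  have e2: "{j \<in> {i-r..i+r+1}. P j} = {j \<in> {i-r..i+r}. P j} \<union> ({i+r+1} \<inter> Collect P)"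
    using assms by auto
  have c1: "card {j \<in> {i-r..i+r+1}. P j} = card {j \<in> {i+1-r..i+1+r}. P j} + card ({i-r} \<inter> Collect P)"
    unfolding e1 by (rule card_Un_disjoint) (auto intro: finite_subset[OF _ finite_atLeastAtMost_int])
  have c2: "card {j \<in> {i-r..i+r+1}. P j} = card {j \<in> {i-r..i+r}. P j} + card ({i+r+1} \<inter> Collect P)"
    unfolding e2 by (rule card_Un_disjoint) (auto intro: finite_subset[OF _ finite_atLeastAtMost_int])
  have "card ({x} \<inter> Collect P) = (if P x then 1 else 0)" for x by auto
  then show ?thesis using c1 c2 by (smt (verit, best) of_nat_add of_nat_1 of_nat_0)
qed

lemma card_total:
  fixes i r :: int
  assumes "r \<ge> 0"
  shows "int (card {j \<in> {i-r..i+r}. P j}) + int (card {j \<in> {i-r..i+r}. \<not> P j}) = 2*r+1"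
proof -
  have u: "{i-r..i+r} = {j \<in> {i-r..i+r}. P j} \<union> {j \<in> {i-r..i+r}. \<not> P j}" by auto
  have "card {i-r..i+r} = card {j \<in> {i-r..i+r}. P j} + card {j \<in> {i-r..i+r}. \<not> P j}"
    by (subst u, rule card_Un_disjoint) (auto intro: finite_subset[OF _ finite_atLeastAtMost_int])
  then have "card {j \<in> {i-r..i+r}. P j} + card {j \<in> {i-r..i+r}. \<not> P j} = card {i-r..i+r}" by simp
  then show ?thesis using assms by simp
qed

lemma maj_step:
  fixes r n c :: int
  assumes "r \<ge> 1" "maj r n \<sigma> c \<noteq> maj r n \<sigma> (c+1)"
  shows "\<sigma> ((c+r+1) mod n) = maj r n \<sigma> (c+1) \<and> \<sigma> ((c-r) mod n) = maj r n \<sigma> c"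
proof -
  define Ones where "Ones i = int (card {j \<in> {i-r..i+r}. \<sigma> (j mod n)})" for i
  define Z where "Z i = int (card {j \<in> {i-r..i+r}. \<not> \<sigma> (j mod n)})" for i
  have m: "maj r n \<sigma> i = (Z i \<le> Ones i)" for i
    unfolding maj_def Ones_def Z_def card_shift[where P="\<lambda>j. \<not> \<sigma> j"] card_shift[where P="\<sigma>"]
    by auto
  have t: "Ones i + Z i = 2*r+1" for i unfolding Ones_def Z_def using card_total assms(1) by simp
  have s1: "Ones (c+1) + (if \<sigma> ((c-r) mod n) then 1 else 0) = Ones c + (if \<sigma> ((c+r+1) mod n) then 1 else 0)"
    unfolding Ones_def using card_step[of r c "\<lambda>j. \<sigma> (j mod n)"] assms(1) by (simp add: add.assoc)
  have s2: "Z (c+1) + (if \<sigma> ((c-r) mod n) then 0 else 1) = Z c + (if \<sigma> ((c+r+1) mod n) then 0 else 1)"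
    unfolding Z_def using card_step[of r c "\<lambda>j. \<not> \<sigma> (j mod n)"] assms(1)
    by (simp add: add.assoc split: if_splits)
  show ?thesis using assms(2) unfolding m using t[of c] t[of "c+1"] s1 s2
    by (auto split: if_splits)
qed

definition starts :: "int \<Rightarrow> bool \<Rightarrow> (int \<Rightarrow> bool) \<Rightarrow> int set" where
  "starts n \<beta> \<sigma> = {i \<in> {0..<n}. \<sigma> i = \<beta> \<and> \<sigma> ((i - 1) mod n) \<noteq> \<beta>}"

lemma blocks_le_starts:
  assumes "n \<ge> 1"
  shows "card (blocks n \<beta> \<sigma>) \<le> card (starts n \<beta> \<sigma>)"
proof -
  have sub: "fst ` blocks n \<beta> \<sigma> \<subseteq> starts n \<beta> \<sigma>"
  proof
    fix x assume "x \<in> fst ` blocks n \<beta> \<sigma>"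
    then obtain j where b: "(x, j) \<in> blocks n \<beta> \<sigma>" by auto
    moreover have "0 \<in> {0..(j - x) mod n}" using assms by simp
    ultimately have "\<sigma> ((x + 0) mod n) = \<beta>" unfolding blocks_def by blast
    moreover have "x mod n = x" using b unfolding blocks_def by auto
    ultimately have "\<sigma> x = \<beta>" by simp
    then show "x \<in> starts n \<beta> \<sigma>" using b \<open>\<sigma> x = \<beta>\<close> unfolding blocks_def starts_def by auto
  qed
  have inj: "inj_on fst (blocks n \<beta> \<sigma>)"
  proof (rule inj_onI)
    fix x y assume xb: "x \<in> blocks n \<beta> \<sigma>" and yb: "y \<in> blocks n \<beta> \<sigma>" and f: "fst x = fst y"
    obtain i j where x: "x = (i, j)" by (cases x)
    obtain j' where y: "y = (i, j')" using f x by (cases y) auto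
    have key: False if b1: "(i,j) \<in> blocks n \<beta> \<sigma>" and b2: "(i,j') \<in> blocks n \<beta> \<sigma>"
        and lt: "(j - i) mod n < (j' - i) mod n" for j j'
    proof -
      let ?m = "(j - i) mod n"
      have "?m \<ge> 0" using assms by simp
      then have "?m + 1 \<in> {0..(j' - i) mod n}" using lt by auto
      then have "\<sigma> ((i + (?m + 1)) mod n) = \<beta>" using b2 unfolding blocks_def by auto
      moreover have "(i + (?m + 1)) mod n = (j + 1) mod n"
        by (metis add.assoc add.commute diff_add_cancel mod_add_left_eq mod_add_right_eq)
      ultimately show False using b1 unfolding blocks_def by auto
    qed
    have "(j - i) mod n = (j' - i) mod n"
      using key[of j j'] key[of j' j] xb yb x y by fastforce
    then have "(i + (j - i)) mod n = (i + (j' - i)) mod n" by (metis mod_add_right_eq)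
    then have "j mod n = j' mod n" by simp
    moreover have "j \<in> {0..<n}" "j' \<in> {0..<n}" using xb yb x y unfolding blocks_def by auto
    ultimately show "x = y" using x y by simp
  qed
  have "finite (starts n \<beta> \<sigma>)" unfolding starts_def by (rule finite_subset[of _ "{0..<n}"]) auto
  then show ?thesis using card_inj_on_le[OF inj sub] by simp
qed

lemma starts_le_blocks:
  assumes "n \<ge> 1"
  shows "card (starts n \<beta> \<sigma>) \<le> card (blocks n \<beta> \<sigma>)"
proof -
  have sub: "starts n \<beta> \<sigma> \<subseteq> fst ` blocks n \<beta> \<sigma>"
  proof
    fix i assume st: "i \<in> starts n \<beta> \<sigma>"
    then have i: "0 \<le> i" "i < n" "\<sigma> i = \<beta>" "\<sigma> ((i - 1) mod n) \<noteq> \<beta>" unfolding starts_def by auto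
    have n2: "n \<ge> 2"
    proof (rule ccontr)
      assume "\<not> n \<ge> 2" then have "n = 1" using assms by simp
      then have "i = 0" using i by presburger
      then have "\<sigma> 0 = \<beta>" using i by simp
      moreover have "\<sigma> 0 \<noteq> \<beta>" using i \<open>n = 1\<close> by simp
      ultimately show False by simp
    qed
    define P where "P t = (\<sigma> ((i + int t + 1) mod n) \<noteq> \<beta>)" for t :: nat
    have ex: "P (nat (n - 2))"
    proof -
      have e: "i + int (nat (n - 2)) + 1 = (i - 1) + n" using n2 by simp
      have "(i + int (nat (n - 2)) + 1) mod n = (i - 1) mod n" unfolding e by (rule mod_add_self2)
      then show ?thesis unfolding P_def using i by simp
    qed
    define m where "m = (LEAST t. P t)"
    have Pm: "P m" unfolding m_def using ex by (rule LeastI)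
    have mle: "m \<le> nat (n - 2)" unfolding m_def using ex by (rule Least_le)
    have notP: "\<not> P t" if "t < m" for t using not_less_Least[OF that[unfolded m_def]] .
    define j where "j = (i + int m) mod n"
    have jm: "(j - i) mod n = int m"
    proof -
      have "(j - i) mod n = (i + int m - i) mod n" unfolding j_def by (metis mod_diff_left_eq)
      also have "\<dots> = int m" using mle n2 by simp
      finally show ?thesis .
    qed
    have "(i, j) \<in> blocks n \<beta> \<sigma>"
      unfolding blocks_def
    proof (simp, intro conjI)
      show "0 \<le> j" "j < n" unfolding j_def using assms by auto
      show "0 \<le> i" "i < n" using i by auto
      show "\<sigma> ((i - 1) mod n) = (\<not> \<beta>)" using i by auto
      have "(j + 1) mod n = (i + int m + 1) mod n" unfolding j_def by (metis mod_add_left_eq)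
      then show "\<sigma> ((j + 1) mod n) = (\<not> \<beta>)" using Pm unfolding P_def by auto
      show "\<forall>k\<in>{0..(j - i) mod n}. \<sigma> ((i + k) mod n) = \<beta>"
      proof
        fix k assume "k \<in> {0..(j - i) mod n}"
        then have k: "0 \<le> k" "k \<le> int m" using jm by auto
        show "\<sigma> ((i + k) mod n) = \<beta>"
        proof (cases "k = 0")
          case True then show ?thesis using i by simp
        next
          case False
          then have "nat (k - 1) < m" using k by auto
          then have "\<not> P (nat (k - 1))" by (rule notP)
          moreover have "i + int (nat (k - 1)) + 1 = i + k" using k False by simp
          ultimately show ?thesis unfolding P_def by simp
        qed
      qed
    qed
    then show "i \<in> fst ` blocks n \<beta> \<sigma>" by force
  qed
  have "finite (blocks n \<beta> \<sigma>)"
    by (rule finite_subset[of _ "{0..<n} \<times> {0..<n}"]) (auto simp: blocks_def)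
  then show ?thesis using sub by (meson card_image_le card_mono finite_imageI le_trans)
qed

lemma discrete_ivt:
  fixes P :: "nat \<Rightarrow> bool"
  assumes "P 0" "\<not> P m"
  shows "\<exists>t<m. P t \<and> \<not> P (Suc t)"
  using assms
proof (induction m)
  case 0 then show ?case by simp
next
  case (Suc m)
  then show ?case by (cases "P m") (auto intro: less_SucI)
qed

lemma starts_mono:
  fixes r n :: int and \<sigma> \<tau> :: "int \<Rightarrow> bool"
  assumes r: "r \<ge> 1" and n: "n \<ge> 1" and per: "\<And>i. \<tau> (i mod n) = maj r n \<sigma> i"
  shows "card (starts n \<beta> \<tau>) \<le> card (starts n \<beta> \<sigma>)"
proof -
  define L where "L a = (LEAST t::nat. \<sigma> ((a + r - int t - 1) mod n) \<noteq> \<beta>)" for a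
  define f where "f a = (a + r - int (L a)) mod n" for a
  have Lp: "\<sigma> ((a + r - int (L a) - 1) mod n) \<noteq> \<beta> \<and> (\<forall>t\<le>L a. \<sigma> ((a + r - int t) mod n) = \<beta>)"
    if a: "a \<in> starts n \<beta> \<tau>" for a
  proof -
    have a1: "0 \<le> a" "a < n" "\<tau> a = \<beta>" "\<tau> ((a - 1) mod n) \<noteq> \<beta>" using a unfolding starts_def by auto
    have m1: "maj r n \<sigma> a = \<beta>" using per[of a] a1 by simp
    have m0: "maj r n \<sigma> (a - 1) \<noteq> \<beta>" using per[of "a-1"] a1 by simp
    have st: "\<sigma> ((a - 1 + r + 1) mod n) = maj r n \<sigma> (a - 1 + 1) \<and> \<sigma> ((a - 1 - r) mod n) = maj r n \<sigma> (a - 1)"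
      by (rule maj_step[OF r]) (use m0 m1 in simp)
    have s0: "\<sigma> ((a + r) mod n) = \<beta>" using st m1 by simp
    have ex: "\<sigma> ((a + r - int (nat (2*r)) - 1) mod n) \<noteq> \<beta>"
    proof -
      have e: "a + r - int (nat (2*r)) - 1 = a - 1 - r" using r by simp
      have "\<sigma> ((a - 1 - r) mod n) \<noteq> \<beta>" using st m0 by simp
      then show ?thesis unfolding e .
    qed
    have p1: "\<sigma> ((a + r - int (L a) - 1) mod n) \<noteq> \<beta>" unfolding L_def using ex by (rule LeastI)
    have p2: "\<sigma> ((a + r - int t) mod n) = \<beta>" if "t \<le> L a" for t
    proof (cases t)
      case 0 then show ?thesis using s0 by simp
    next
      case (Suc t')
      then have "t' < L a" using that by simp
      then have "\<not> \<sigma> ((a + r - int t' - 1) mod n) \<noteq> \<beta>" unfolding L_def by (rule not_less_Least)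
      moreover have "a + r - int t' - 1 = a + r - int t" using Suc by simp
      ultimately show ?thesis by simp
    qed
    show ?thesis using p1 p2 by blast
  qed
  have cong: "(x + z) mod n = (y + z) mod n" if "x mod n = y mod n" for x y z :: int
    using that by (metis mod_add_left_eq)
  have core: "a = a'" if a: "a \<in> starts n \<beta> \<tau>" and a': "a' \<in> starts n \<beta> \<tau>"
    and fe: "f a = f a'" and le: "L a \<le> L a'" for a a'
  proof -
    have a1: "0 \<le> a" "a < n" "\<tau> a = \<beta>" "\<tau> ((a - 1) mod n) \<noteq> \<beta>" using a unfolding starts_def by auto
    have a1': "0 \<le> a'" "a' < n" "\<tau> a' = \<beta>" "\<tau> ((a' - 1) mod n) \<noteq> \<beta>" using a' unfolding starts_def by auto
    define d where "d = L a' - L a"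
    have fe': "(a + r - int (L a)) mod n = (a' + r - int (L a')) mod n" using fe unfolding f_def .
    have shift: "(a + int k) mod n = (a' + (int k - int d)) mod n" for k
    proof -
      have "(a + r - int (L a) + (int (L a) - r + int k)) mod n = (a' + r - int (L a') + (int (L a) - r + int k)) mod n"
        by (rule cong[OF fe'])
      moreover have "a + r - int (L a) + (int (L a) - r + int k) = a + int k" by simp
      moreover have "a' + r - int (L a') + (int (L a) - r + int k) = a' + (int k - int d)"
        unfolding d_def using le by simp
      ultimately show ?thesis by simp
    qed
    show ?thesis
    proof (cases "d = 0")
      case True
      then have "a mod n = a' mod n" using shift[of 0] by simp
      then show ?thesis using a1 a1' by simp
    next
      case False
      define P where "P t = (\<tau> ((a + int t) mod n) = \<beta>)" for t
      have P0: "P 0" unfolding P_def using a1 by simp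
      have Pd: "\<not> P (d - 1)"
      proof -
        have "(a + int (d - 1)) mod n = (a' - 1) mod n" using shift[of "d-1"] False by simp
        then show ?thesis unfolding P_def using a1' by simp
      qed
      obtain t where t: "t < d - 1" "P t" "\<not> P (Suc t)" using discrete_ivt[of P, OF P0 Pd] by blast
      define c where "c = a + int t"
      have mc: "maj r n \<sigma> c = \<beta>" using t(2) per[of c] unfolding P_def c_def by simp
      have ce: "a + int (Suc t) = c + 1" unfolding c_def by simp
      have mc1: "maj r n \<sigma> (c + 1) \<noteq> \<beta>" using t(3) per[of "c+1"] unfolding P_def ce by simp
      have "\<sigma> ((c + r + 1) mod n) = maj r n \<sigma> (c + 1)"
        using maj_step[OF r, where \<sigma>=\<sigma> and c=c and n=n] mc mc1 by simp
      then have bad: "\<sigma> ((c + r + 1) mod n) \<noteq> \<beta>" using mc1 by simp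
      define s where "s = L a' - (L a + t + 1)"
      have sle: "s \<le> L a'" unfolding s_def by simp
      have "\<sigma> ((a' + r - int s) mod n) = \<beta>" using Lp[OF a'] sle by blast
      moreover have "(a' + r - int s) mod n = (c + r + 1) mod n"
      proof -
        have "(a + r - int (L a) + (int (L a) + int t + 1)) mod n = (a' + r - int (L a') + (int (L a) + int t + 1)) mod n"
          by (rule cong[OF fe'])
        moreover have "a + r - int (L a) + (int (L a) + int t + 1) = c + r + 1" unfolding c_def by simp
        moreover have "a' + r - int (L a') + (int (L a) + int t + 1) = a' + r - int s"
          unfolding s_def using t(1) le unfolding d_def by simp
        ultimately show ?thesis by simp
      qed
      ultimately show ?thesis using bad by simp
    qed
  qed
  have inj: "inj_on f (starts n \<beta> \<tau>)"
  proof (rule inj_onI)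
    fix a a' assume "a \<in> starts n \<beta> \<tau>" "a' \<in> starts n \<beta> \<tau>" "f a = f a'"
    then show "a = a'" using core[of a a'] core[of a' a] by (cases "L a \<le> L a'") auto
  qed
  have sub: "f ` starts n \<beta> \<tau> \<subseteq> starts n \<beta> \<sigma>"
  proof
    fix x assume "x \<in> f ` starts n \<beta> \<tau>"
    then obtain a where a: "a \<in> starts n \<beta> \<tau>" and x: "x = f a" by auto
    have "\<sigma> x = \<beta>" using Lp[OF a] unfolding x f_def by simp
    moreover have "(x - 1) mod n = (a + r - int (L a) - 1) mod n" unfolding x f_def
      by (metis mod_diff_left_eq)
    then have "\<sigma> ((x - 1) mod n) \<noteq> \<beta>" using Lp[OF a] by simp
    moreover have "0 \<le> x" "x < n" unfolding x f_def using n by auto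
    ultimately show "x \<in> starts n \<beta> \<sigma>" unfolding starts_def by simp
  qed
  have "finite (starts n \<beta> \<sigma>)" unfolding starts_def by (rule finite_subset[of _ "{0..<n}"]) auto
  then show ?thesis using card_inj_on_le[OF inj sub] by simp
qed

lemma blocks_mono:
  fixes r n :: int and \<sigma> \<tau> :: "int \<Rightarrow> bool"
  assumes r: "r \<ge> 1" and n: "n \<ge> 1" and per: "\<And>i. \<tau> (i mod n) = maj r n \<sigma> i"
  shows "card (blocks n \<beta> \<tau>) \<le> card (blocks n \<beta> \<sigma>)"
  using blocks_le_starts[OF n, of \<beta> \<tau>] starts_mono[OF r n per, of \<beta>] starts_le_blocks[OF n, of \<beta> \<sigma>]
  by linarith

lemma card_all:
  fixes n :: int
  assumes n: "n \<ge> 1"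
  shows "card (all_blocks n \<sigma>) = card (blocks n False \<sigma>) + card (blocks n True \<sigma>)"
proof -
  have fin: "finite (blocks n b \<sigma>)" for b
    by (rule finite_subset[of _ "{0..<n} \<times> {0..<n}"]) (auto simp: blocks_def)
  have "blocks n False \<sigma> \<inter> blocks n True \<sigma> = {}"
  proof (rule ccontr)
    assume "blocks n False \<sigma> \<inter> blocks n True \<sigma> \<noteq> {}"
    then obtain i j where "(i, j) \<in> blocks n False \<sigma>" "(i, j) \<in> blocks n True \<sigma>" by auto
    moreover have "0 \<in> {0..(j - i) mod n}" using n by simp
    ultimately have "\<sigma> ((i + 0) mod n) = False" "\<sigma> ((i + 0) mod n) = True" unfolding blocks_def by blast+
    then show False by simp
  qed
  then show ?thesis unfolding all_blocks_def using fin by (simp add: card_Un_disjoint)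
qed

theorem claim16:
  fixes r n :: int and \<sigma> \<sigma>' :: "int \<Rightarrow> bool"
  assumes "r \<ge> 1" and "n \<ge> 1" and "tp_pair r n \<sigma> \<sigma>'"
  shows "card (all_blocks n \<sigma>) = card (all_blocks n \<sigma>')"
proof -
  have p1: "\<sigma>' (i mod n) = maj r n \<sigma> i" for i
  proof -
    have "i mod n \<in> {0..<n}" using assms(2) by simp
    then have "maj r n \<sigma> (i mod n) = \<sigma>' (i mod n)" using assms(3) unfolding tp_pair_def by blast
    then show ?thesis using maj_periodic[OF assms(2)] by simp
  qed
  have p2: "\<sigma> (i mod n) = maj r n \<sigma>' i" for i
  proof -
    have "i mod n \<in> {0..<n}" using assms(2) by simp
    then have "maj r n \<sigma>' (i mod n) = \<sigma> (i mod n)" using assms(3) unfolding tp_pair_def by blast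
    then show ?thesis using maj_periodic[OF assms(2)] by simp
  qed
  have "card (blocks n b \<sigma>') \<le> card (blocks n b \<sigma>)" for b
    by (rule blocks_mono[OF assms(1,2) p1])
  moreover have "card (blocks n b \<sigma>) \<le> card (blocks n b \<sigma>')" for b
    by (rule blocks_mono[OF assms(1,2) p2])
  ultimately show ?thesis using card_all[OF assms(2)] by (metis le_antisym)
qed

end
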